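(* For every $r\in[0,1]$, the density of $1$'s in $b(r)$ exists and equals $r$, i.e. $\lim_{n\to\infty}|\{m<n:b(r)(m)=1\}|/n=r$.
   Context: For $X,Y\in2^\omega$, $(X\oplus Y)(2n)=X(n)$, $(X\oplus Y)(2n+1)=Y(n)$. The map $b:[0,1]\to2^\omega$ is defined recursively by $b(0)=0^\omega$, $b(1)=1^\omega$, $b(r)=0^\omega\oplus b(2r)$ for $0<r\le1/2$, and $b(r)=b(2r-1)\oplus1^\omega$ for $1/2\le r<1$. *)

theory Defs
  imports Complex_Main
begin

text \<open>Elements of 2^omega are represented as nat => bool (True = 1, False = 0).\<close>

definition join :: "(nat \<Rightarrow> bool) \<Rightarrow> (nat \<Rightarrow> bool) \<Rightarrow> (nat \<Rightarrow> bool)" where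
  "join X Y n = (if even n then X (n div 2) else Y (n div 2))"

definition b_spec :: "(real \<Rightarrow> nat \<Rightarrow> bool) \<Rightarrow> bool" where
  "b_spec f \<longleftrightarrow>
     f 0 = (\<lambda>_. False) \<and> f 1 = (\<lambda>_. True) \<and>
     (\<forall>r. 0 < r \<and> r \<le> 1/2 \<longrightarrow> f r = join (\<lambda>_. False) (f (2*r))) \<and>
     (\<forall>r. 1/2 \<le> r \<and> r < 1 \<longrightarrow> f r = join (f (2*r - 1)) (\<lambda>_. True))"

definition b :: "real \<Rightarrow> nat \<Rightarrow> bool" where
  "b r = (THE X. \<exists>f. b_spec f \<and> f r = X)"

end

theory Submission
  imports Defs "HOL-Real_Asymp.Real_Asymp"
begin

function F :: "real \<Rightarrow> nat \<Rightarrow> bool" where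
  "F r n = (if n = 0 then r = 1 else if r = 0 then False else if r = 1 then True
            else if r \<le> 1/2 then (if even n then False else F (2*r) (n div 2))
            else (if even n then F (2*r-1) (n div 2) else True))"
  by auto
termination by (relation "measure (\<lambda>(r,n). n)") auto

declare F.simps[simp del]

lemma F0: "F 0 n = False"
  by (subst F.simps) auto

lemma F_zero: "F x 0 = (x = 1)"
  by (subst F.simps) auto

lemma F1: "F 1 n = True"
  by (subst F.simps) auto

lemma F_spec: "b_spec F"
  unfolding b_spec_def
proof (intro conjI allI impI)
  show "F 0 = (\<lambda>_. False)" by (auto simp: F0)
  show "F 1 = (\<lambda>_. True)" by (auto simp: F1)
next
  fix r :: real assume r: "0 < r \<and> r \<le> 1/2"
  show "F r = join (\<lambda>_. False) (F (2*r))"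
  proof
    fix n show "F r n = join (\<lambda>_. False) (F (2 * r)) n"
      using r by (subst F.simps) (auto simp: join_def)
  qed
next
  fix r :: real assume r: "1/2 \<le> r \<and> r < 1"
  show "F r = join (F (2*r-1)) (\<lambda>_. True)"
  proof
    fix n show "F r n = join (F (2*r-1)) (\<lambda>_. True) n"
    proof (cases "r = 1/2")
      case True
      show ?thesis unfolding True by (subst F.simps) (simp add: join_def F0 F1)
    next
      case False
      then show ?thesis using r by (subst F.simps) (auto simp: join_def F_zero)
    qed
  qed
qed

lemma spec_zero:
  assumes f: "b_spec f"
  shows "0 \<le> r \<Longrightarrow> r \<le> 1 - 1/2^k \<Longrightarrow> f r 0 = False"
proof (induction k arbitrary: r)
  case 0
  then have "r = 0" by simp
  then show ?case using f by (simp add: b_spec_def)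
next
  case (Suc k)
  show ?case
  proof (cases "r = 0")
    case True then show ?thesis using f by (simp add: b_spec_def)
  next
    case False
    show ?thesis
    proof (cases "r \<le> 1/2")
      case True
      then show ?thesis using f False Suc.prems by (simp add: b_spec_def join_def)
    next
      case nle: False
      have "(0::real) < 1/2^Suc k" by simp
      then have r1: "r < 1" using Suc.prems by linarith
      have "f r = join (f (2*r-1)) (\<lambda>_. True)" using f nle r1 by (simp add: b_spec_def)
      then have "f r 0 = f (2*r-1) 0" by (simp add: join_def)
      moreover have "f (2*r-1) 0 = False"
        apply (rule Suc.IH)
        using nle Suc.prems by (auto simp: field_simps)
      ultimately show ?thesis by simp
    qed
  qed
qed

lemma spec_zero':
  assumes f: "b_spec f" and "0 \<le> r" "r < 1"
  shows "f r 0 = False"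
proof -
  obtain k where k: "(1/2::real)^k < 1 - r"
    using real_arch_pow_inv[of "1 - r" "1/2"] assms by auto
  show ?thesis
    apply (rule spec_zero[OF f, of r k])
    using assms k by (auto simp: power_divide)
qed

lemma spec_unique:
  assumes f: "b_spec f" and g: "b_spec g"
  shows "0 \<le> r \<Longrightarrow> r \<le> 1 \<Longrightarrow> f r n = g r n"
proof (induction n arbitrary: r rule: less_induct)
  case (less n)
  show ?case
  proof (cases "r = 0 \<or> r = 1")
    case True
    have "f 0 = (\<lambda>_. False)" "f 1 = (\<lambda>_. True)" using f unfolding b_spec_def by blast+
    moreover have "g 0 = (\<lambda>_. False)" "g 1 = (\<lambda>_. True)" using g unfolding b_spec_def by blast+
    ultimately show ?thesis using True by auto
  next
    case nb: False
    show ?thesis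
    proof (cases "n = 0")
      case True
      then show ?thesis using spec_zero'[OF f] spec_zero'[OF g] less.prems nb by auto
    next
      case n0: False
      have lt: "n div 2 < n" using n0 by simp
      show ?thesis
      proof (cases "r \<le> 1/2")
        case True
        then have "f r = join (\<lambda>_. False) (f (2*r))" "g r = join (\<lambda>_. False) (g (2*r))"
          using f g nb less.prems by (auto simp: b_spec_def)
        then show ?thesis using less.IH[OF lt, of "2*r"] True less.prems by (simp add: join_def)
      next
        case False
        then have "f r = join (f (2*r-1)) (\<lambda>_. True)" "g r = join (g (2*r-1)) (\<lambda>_. True)"
          using f g nb less.prems by (auto simp: b_spec_def)
        then show ?thesis using less.IH[OF lt, of "2*r-1"] False less.prems by (simp add: join_def)
      qed
    qed
  qed
qed

lemma b_eq_F: "0 \<le> r \<Longrightarrow> r \<le> 1 \<Longrightarrow> b r = F r"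
  unfolding b_def
proof (rule the_equality)
  show "\<exists>f. b_spec f \<and> f r = F r" using F_spec by blast
next
  fix X assume "0 \<le> r" "r \<le> 1" "\<exists>f. b_spec f \<and> f r = X"
  then show "X = F r" using spec_unique[OF _ F_spec] by blast
qed

definition cnt :: "(nat \<Rightarrow> bool) \<Rightarrow> nat \<Rightarrow> real" where
  "cnt X N = (\<Sum>m<N. if X m then 1 else 0)"

lemma card_cnt: "real (card {m. m < N \<and> X m}) = cnt X N"
proof (induction N)
  case 0 then show ?case by (simp add: cnt_def)
next
  case (Suc N)
  show ?case
  proof (cases "X N")
    case True
    have "{m. m < Suc N \<and> X m} = insert N {m. m < N \<and> X m}" using True by auto
    then show ?thesis using Suc True by (simp add: cnt_def)
  next
    case False
    have "{m. m < Suc N \<and> X m} = {m. m < N \<and> X m}" using False less_Suc_eq by auto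
    then show ?thesis using Suc False by (simp add: cnt_def)
  qed
qed

lemma cnt_Suc: "cnt X (Suc n) = cnt X n + (if X n then 1 else 0)"
  by (simp add: cnt_def)

lemma cnt_join: "cnt (join Y Z) (2*k) = cnt Y k + cnt Z k"
proof (induction k)
  case 0 then show ?case by (simp add: cnt_def)
next
  case (Suc k)
  have e: "2 * Suc k = Suc (Suc (2*k))" by simp
  show ?case unfolding e cnt_Suc Suc by (simp add: join_def)
qed

lemma cnt_F0: "cnt (F 0) n = 0" by (simp add: cnt_def F0)
lemma cnt_F1: "cnt (F 1) n = n" by (simp add: cnt_def F1)
lemma cnt_false: "cnt (\<lambda>_. False) n = 0" by (simp add: cnt_def)
lemma cnt_true: "cnt (\<lambda>_. True) n = n" by (simp add: cnt_def)

lemma E2: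
  assumes "0 \<le> r" "r \<le> 1"
  shows "\<exists>s. 0 \<le> s \<and> s \<le> 1 \<and> (\<forall>k. cnt (F r) (2*k) - r*(2*k) = cnt (F s) k - s*k)"
proof -
  have sp: "b_spec F" by (rule F_spec)
  consider "r = 0" | "r = 1" | "0 < r \<and> r \<le> 1/2" | "1/2 < r \<and> r < 1" using assms by linarith
  then show ?thesis
  proof cases
    case 1 then show ?thesis by (intro exI[of _ 0]) (simp add: cnt_F0)
  next
    case 2 then show ?thesis by (intro exI[of _ 1]) (simp add: cnt_F1)
  next
    case 3
    then have "F r = join (\<lambda>_. False) (F (2*r))" using sp by (simp add: b_spec_def)
    then show ?thesis using 3 by (intro exI[of _ "2*r"]) (simp add: cnt_join cnt_false)
  next
    case 4
    then have "F r = join (F (2*r-1)) (\<lambda>_. True)" using sp by (simp add: b_spec_def)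
    then have "\<forall>k. cnt (F r) (2*k) = cnt (F (2*r-1)) k + k" by (simp add: cnt_join cnt_true)
    then show ?thesis using 4 by (intro exI[of _ "2*r-1"]) (simp add: algebra_simps)
  qed
qed

lemma bound: "0 \<le> r \<Longrightarrow> r \<le> 1 \<Longrightarrow> \<bar>cnt (F r) N - r * N\<bar> \<le> 2 * sqrt N"
proof (induction N arbitrary: r rule: less_induct)
  case (less N)
  show ?case
  proof (cases "N = 0")
    case True then show ?thesis by (simp add: cnt_def)
  next
    case N0: False
    obtain s where s: "0 \<le> s" "s \<le> 1" "\<And>k. cnt (F r) (2*k) - r*(2*k) = cnt (F s) k - s*k"
      using E2[OF less.prems] by blast
    obtain k where k: "N = 2*k \<or> N = Suc (2*k)" by (metis oddE evenE Suc_eq_plus1)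
    have kl: "k < N" using k N0 by auto
    have IH: "\<bar>cnt (F s) k - s*k\<bar> \<le> 2 * sqrt k" using less.IH[OF kl s(1,2)] .
    from k show ?thesis
    proof
      assume Nk: "N = 2*k"
      have a: "sqrt k \<le> sqrt (real N)" using Nk by simp
      have "\<bar>cnt (F r) N - r*N\<bar> = \<bar>cnt (F s) k - s*k\<bar>" using s(3)[of k] Nk by simp
      then show ?thesis using IH a by linarith
    next
      assume Nk: "N = Suc (2*k)"
      have eq: "cnt (F r) N - r*N = (cnt (F s) k - s*k) + ((if F r (2*k) then 1 else 0) - r)"
        using s(3)[of k] Nk by (simp add: cnt_Suc algebra_simps)
      have b1: "\<bar>(if F r (2*k) then 1 else 0) - r\<bar> \<le> 1" using less.prems by auto
      have sq: "2 * sqrt k + 1 \<le> 2 * sqrt N"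
      proof -
        have "(sqrt k + 1/2)^2 = k + sqrt k + 1/4" by (simp add: power2_eq_square algebra_simps)
        also have "\<dots> \<le> N"
        proof -
          have "0 \<le> (sqrt k - 1)^2" by simp
          then have "2 * sqrt k \<le> k + 1" by (simp add: power2_diff)
          then show ?thesis using Nk by simp
        qed
        finally have "sqrt k + 1/2 \<le> sqrt N" by (simp add: real_le_rsqrt)
        then show ?thesis by simp
      qed
      show ?thesis unfolding eq using IH b1 sq by linarith
    qed
  qed
qed

theorem lemma2p6:
  fixes r :: real
  assumes "0 \<le> r" and "r \<le> 1"
  shows "(\<lambda>n. real (card {m. m < n \<and> b r m}) / real n) \<longlonglongrightarrow> r"
proof -
  have eqf: "(\<lambda>n. real (card {m. m < n \<and> b r m}) / real n) = (\<lambda>n. cnt (F r) n / n)"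
    using b_eq_F[OF assms] by (simp add: card_cnt)
  have g: "(\<lambda>n::nat. 2 / sqrt (real n)) \<longlonglongrightarrow> 0" by real_asymp
  have "(\<lambda>n. cnt (F r) n / n - r) \<longlonglongrightarrow> 0"
  proof (rule tendsto_0_le[OF g, of _ 1])
    show "\<forall>\<^sub>F n in sequentially. norm (cnt (F r) n / real n - r) \<le> norm (2 / sqrt (real n)) * 1"
      using eventually_gt_at_top[of 0]
    proof eventually_elim
      case (elim n)
      have "norm (cnt (F r) n / real n - r) = \<bar>cnt (F r) n - r*n\<bar> / n"
        using elim by (simp add: field_simps)
      also have "\<dots> \<le> 2 * sqrt n / n" using bound[OF assms, of n] elim
        by (simp add: divide_right_mono)
      also have "\<dots> = 2 / sqrt n"
      proof -
        have s: "real n = sqrt n * sqrt n" by simp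
        have p: "sqrt (real n) > 0" using elim by simp
        have "2 * sqrt n / n = 2 * sqrt n / (sqrt n * sqrt n)" by (subst s) (rule refl)
        also have "\<dots> = 2 / sqrt n"
        proof -
          have "\<And>a::real. a > 0 \<Longrightarrow> 2*a/(a*a) = 2/a" by (simp add: field_simps)
          then show ?thesis using p by blast
        qed
        finally show ?thesis .
      qed
      finally show ?case by simp
    qed
  qed
  then have "(\<lambda>n. cnt (F r) n / n - r + r) \<longlonglongrightarrow> 0 + r" by (rule tendsto_add) simp
  then show ?thesis unfolding eqf by simp
qed

end
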